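(* Let $c\le 7$ be a nonnegative integer and let $C\subset V(\tfrac12 H^{0}_{24})$ be such that $\chi_C$ is a perfect coloring of $\tfrac12 H^{0}_{24}$ with parameters $((20+c,\,256-c)(c,\,276-c))$. Then $C$ is a union of spheres.
   Context: $E^{24}$ is the set of binary words of length $24$ with Hamming distance. $\tfrac12 H^{0}_{24}$ is the graph on even-weight words of $E^{24}$, adjacent iff at Hamming distance exactly $2$ (degree $276$). A sphere is a set $S\subset V(\tfrac12 H^{0}_{24})$ consisting of all $24$ words at Hamming distance $1$ from some odd-weight word (its center). For a set $C$ with $\emptyset\ne C\subsetneq V$, $\chi_C$ is a perfect coloring with parameters $((a,b)(c,d))$ if every vertex of $C$ has exactly $a$ neighbours in $C$ and $b$ outside, and every vertex outside $C$ has exactly $c$ neighbours in $C$ and $d$ outside. *)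

theory Defs
  imports Main
begin

text \<open>Binary words of length 24 are represented by their supports: subsets of {0..<24}.
  Hamming distance is the cardinality of the symmetric difference.\<close>

definition words :: "nat set set" where
  "words = Pow {0..<24}"

definition hdist :: "nat set \<Rightarrow> nat set \<Rightarrow> nat" where
  "hdist x y = card ((x - y) \<union> (y - x))"

text \<open>Vertex set of the halved 24-cube: even-weight words.\<close>
definition V24 :: "nat set set" where
  "V24 = {x \<in> words. even (card x)}"

definition adj24 :: "nat set \<Rightarrow> nat set \<Rightarrow> bool" where
  "adj24 x y \<longleftrightarrow> hdist x y = 2"

definition sphere :: "nat set \<Rightarrow> nat set set" where
  "sphere z = {x \<in> words. hdist x z = 1}"

definition is_sphere :: "nat set set \<Rightarrow> bool" where
  "is_sphere S \<longleftrightarrow> (\<exists>z \<in> words. odd (card z) \<and> S = sphere z)"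

definition perfect_coloring24 :: "nat set set \<Rightarrow> nat \<Rightarrow> nat \<Rightarrow> nat \<Rightarrow> nat \<Rightarrow> bool" where
  "perfect_coloring24 C a b c d \<longleftrightarrow>
     C \<noteq> {} \<and> C \<subset> V24 \<and>
     (\<forall>v \<in> C. card {u \<in> C. adj24 v u} = a \<and> card {u \<in> V24 - C. adj24 v u} = b) \<and>
     (\<forall>v \<in> V24 - C. card {u \<in> C. adj24 v u} = c \<and> card {u \<in> V24 - C. adj24 v u} = d)"

end

theory Submission
  imports Defs
begin

definition sd :: "nat set \<Rightarrow> nat set \<Rightarrow> nat set" where
  "sd A B = (A - B) \<union> (B - A)"

lemma sd_sd: "sd (sd x A) (sd x B) = sd A B" unfolding sd_def by blast
lemma sd_inv: "sd x (sd x A) = A" unfolding sd_def by blast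
lemma sd_empty: "sd x {} = x" unfolding sd_def by blast
lemma sd_sub: "x \<subseteq> I \<Longrightarrow> A \<subseteq> I \<Longrightarrow> sd x A \<subseteq> I" unfolding sd_def by blast

lemma card_sd: assumes "finite A" "finite B"
  shows "card (sd A B) + 2 * card (A \<inter> B) = card A + card B"
proof -
  have e: "sd A B = (A \<union> B) - (A \<inter> B)" unfolding sd_def by blast
  have "card (sd A B) = card (A \<union> B) - card (A \<inter> B)"
    unfolding e by (rule card_Diff_subset) (use assms in auto)
  moreover have "card (A \<inter> B) \<le> card (A \<union> B)" by (rule card_mono) (use assms in auto)
  moreover have "card (A \<union> B) + card (A \<inter> B) = card A + card B" using card_Un_Int[OF assms] by simp
  ultimately show ?thesis by linarith
qed

definition DD :: "nat set set \<Rightarrow> nat set \<Rightarrow> nat \<Rightarrow> nat" where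
  "DD C x a = card {b \<in> {0..<24} - {a}. sd x {a,b} \<in> C}"
definition RR :: "nat set set \<Rightarrow> nat set \<Rightarrow> nat \<Rightarrow> nat set set" where
  "RR C x a = {T. T \<subseteq> {0..<24} - {a} \<and> card T = 3 \<and> sd x (insert a T) \<in> C}"
definition QQ :: "nat set set \<Rightarrow> nat set \<Rightarrow> nat \<Rightarrow> nat \<Rightarrow> nat" where
  "QQ C x a b = card {T \<in> RR C x a. b \<in> T}"
definition cnt :: "nat set set \<Rightarrow> nat set \<Rightarrow> nat" where
  "cnt C w = card {u \<in> C. adj24 w u}"

lemma finite_RR: "finite (RR C x a)"
proof -
  have "RR C x a \<subseteq> Pow {0..<24}" unfolding RR_def by auto
  then show ?thesis by (rule finite_subset) auto
qed

lemma cnt_eq: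
  assumes CI: "C \<subseteq> Pow {0..<24}" and xI: "x \<subseteq> {0..<24}"
  shows "cnt C (sd x p) = card {r. r \<subseteq> {0..<24} \<and> card (sd p r) = 2 \<and> sd x r \<in> C}"
proof -
  let ?G = "{r. r \<subseteq> {0..<24} \<and> card (sd p r) = 2 \<and> sd x r \<in> C}"
  have eq: "{u \<in> C. adj24 (sd x p) u} = sd x ` ?G"
  proof
    show "{u \<in> C. adj24 (sd x p) u} \<subseteq> sd x ` ?G"
    proof
      fix u assume u: "u \<in> {u \<in> C. adj24 (sd x p) u}"
      then have uI: "u \<subseteq> {0..<24}" and uC: "u \<in> C" and ad: "card (sd (sd x p) u) = 2"
        using CI by (auto simp: adj24_def hdist_def sd_def)
      have e1: "u = sd x (sd x u)" by (simp add: sd_inv)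
      have "sd (sd x p) (sd x (sd x u)) = sd p (sd x u)" by (rule sd_sd)
      then have "card (sd p (sd x u)) = 2" using ad e1 by simp
      moreover have "sd x u \<subseteq> {0..<24}" using sd_sub[OF xI uI] .
      moreover have "sd x (sd x u) \<in> C" using uC e1 by simp
      ultimately have "sd x u \<in> ?G" by blast
      with e1 show "u \<in> sd x ` ?G" by blast
    qed
  next
    show "sd x ` ?G \<subseteq> {u \<in> C. adj24 (sd x p) u}"
    proof
      fix u assume "u \<in> sd x ` ?G"
      then obtain r where r: "r \<in> ?G" "u = sd x r" by blast
      have "sd (sd x p) (sd x r) = sd p r" by (rule sd_sd)
      then have "hdist (sd x p) u = 2" using r by (simp add: hdist_def sd_def)
      then show "u \<in> {u \<in> C. adj24 (sd x p) u}" using r by (simp add: adj24_def)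
    qed
  qed
  have inj: "inj_on (sd x) ?G" proof (rule inj_onI) fix r s assume "sd x r = sd x s" then show "r = s" using sd_inv[of x r] sd_inv[of x s] by (metis sd_inv) qed
  have "card {u \<in> C. adj24 (sd x p) u} = card ?G" unfolding eq by (rule card_image[OF inj])
  then show ?thesis unfolding cnt_def .
qed


lemma card_inter2: "a \<noteq> b \<Longrightarrow> card ({a,b} \<inter> r) = (if a \<in> r then 1 else 0) + (if b \<in> r then 1 else 0)"
  by (cases "a \<in> r"; cases "b \<in> r") (auto simp: Int_insert_left)

lemma card_sd2:
  assumes "a \<noteq> b" "finite r"
  shows "card (sd {a,b} r) + 2 * ((if a \<in> r then 1 else 0) + (if b \<in> r then 1 else 0)) = 2 + card r"
  using card_sd[of "{a,b}" r] assms card_inter2[OF assms(1), of r] by simp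

lemma card1_ex: "card A = Suc 0 \<Longrightarrow> \<exists>y. A = {y}" by (simp add: card_Suc_eq)

lemma G_decomp:
  assumes aI: "a \<in> {0..<24}" and bI: "b \<in> {0..<24}" and ab: "a \<noteq> b"
  shows "{r. r \<subseteq> {0..<24} \<and> card (sd {a,b} r) = 2 \<and> sd x r \<in> C} =
     (if x \<in> C then {{}} else {})
   \<union> ((\<lambda>y. {b,y}) ` {y \<in> {0..<24} - {a,b}. sd x {b,y} \<in> C})
   \<union> ((\<lambda>y. {a,y}) ` {y \<in> {0..<24} - {a,b}. sd x {a,y} \<in> C})
   \<union> (insert a ` {T \<in> RR C x a. b \<in> T})" (is "?G = ?U")
proof
  show "?G \<subseteq> ?U"
  proof
    fix r assume r: "r \<in> ?G"
    then have rI: "r \<subseteq> {0..<24}" and rc: "card (sd {a,b} r) = 2" and rC: "sd x r \<in> C" by auto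
    have fr: "finite r" using rI finite_subset by blast
    have cr: "card r = 2 * ((if a \<in> r then 1 else 0) + (if b \<in> r then 1 else 0))"
      using card_sd2[OF ab fr] rc by simp
    show "r \<in> ?U"
    proof (cases "a \<in> r")
      case ar: True
      show ?thesis
      proof (cases "b \<in> r")
        case br: True
        let ?T = "r - {a}"
        have "card ?T = 3" using cr ar br fr by simp
        moreover have "?T \<subseteq> {0..<24} - {a}" using rI by auto
        moreover have "sd x (insert a ?T) \<in> C" using rC ar by (simp add: insert_absorb)
        ultimately have "?T \<in> {T \<in> RR C x a. b \<in> T}" using br ab by (auto simp: RR_def)
        moreover have "r = insert a ?T" using ar by auto
        ultimately show ?thesis by blast
      next
        case br: False
        have "card (r - {a}) = Suc 0" using cr ar br fr by simp
        then obtain y where y: "r - {a} = {y}" using card1_ex by blast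
        have ry: "r = {a,y}" using y ar by auto
        have "y \<in> {0..<24} - {a,b}" using y rI br by auto
        moreover have "sd x {a,y} \<in> C" using rC ry by simp
        ultimately show ?thesis using ry by blast
      qed
    next
      case ar: False
      show ?thesis
      proof (cases "b \<in> r")
        case br: True
        have "card (r - {b}) = Suc 0" using cr ar br fr by simp
        then obtain y where y: "r - {b} = {y}" using card1_ex by blast
        have ry: "r = {b,y}" using y br by auto
        have "y \<in> {0..<24} - {a,b}" using y rI ar by auto
        moreover have "sd x {b,y} \<in> C" using rC ry by simp
        ultimately show ?thesis using ry by blast
      next
        case br: False
        have "r = {}" using cr ar br fr by simp
        then show ?thesis using rC by (simp add: sd_empty)
      qed
    qed
  qed
next
  show "?U \<subseteq> ?G"
  proof
    fix r assume r: "r \<in> ?U"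
    then consider (z) "x \<in> C" "r = {}"
      | (one) y where "y \<in> {0..<24} - {a,b}" "sd x {b,y} \<in> C" "r = {b,y}"
      | (two) y where "y \<in> {0..<24} - {a,b}" "sd x {a,y} \<in> C" "r = {a,y}"
      | (three) T where "T \<in> RR C x a" "b \<in> T" "r = insert a T"
      by (auto split: if_splits)
    then show "r \<in> ?G"
    proof cases
      case z then show ?thesis using ab by (simp add: sd_empty sd_def)
    next
      case one
      have "sd {a,b} r = {a,y}" using one ab unfolding sd_def by auto
      then show ?thesis using one ab bI by auto
    next
      case two
      have "sd {a,b} r = {b,y}" using two ab unfolding sd_def by auto
      then show ?thesis using two ab aI by auto
    next
      case three
      have T: "T \<subseteq> {0..<24} - {a}" "card T = 3" "sd x (insert a T) \<in> C" using three(1) by (auto simp: RR_def)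
      have fT: "finite T" using T(1) finite_subset by blast
      have "sd {a,b} r = T - {b}" using three T(1) ab unfolding sd_def by auto
      then have "card (sd {a,b} r) = 2" using T(2) three(2) fT by simp
      moreover have "r \<subseteq> {0..<24}" using three(3) T(1) aI by blast
      moreover have "sd x r \<in> C" using three(3) T(3) by simp
      ultimately show ?thesis by blast
    qed
  qed
qed


lemma DD_split:
  assumes aI: "a \<in> {0..<24}" and ab: "a \<noteq> b"
  shows "DD C x b = card {y \<in> {0..<24} - {a,b}. sd x {b,y} \<in> C} + (if sd x {a,b} \<in> C then 1 else 0)"
proof -
  let ?S = "{y \<in> {0..<24} - {a,b}. sd x {b,y} \<in> C}"
  have fS: "finite ?S" by auto
  have aS: "a \<notin> ?S" by auto
  have "{y \<in> {0..<24} - {b}. sd x {b,y} \<in> C} = (if sd x {a,b} \<in> C then insert a ?S else ?S)"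
  proof -
    have ba: "{b,a} = {a,b}" by blast
    show ?thesis using aI ab by (auto simp: ba)
  qed
  then show ?thesis unfolding DD_def using fS aS by simp
qed

lemma Dec:
  assumes CI: "C \<subseteq> Pow {0..<24}" and xI: "x \<subseteq> {0..<24}"
    and aI: "a \<in> {0..<24}" and bI: "b \<in> {0..<24}" and ab: "a \<noteq> b"
  shows "cnt C (sd x {a,b}) + 2 * (if sd x {a,b} \<in> C then 1 else 0)
       = (if x \<in> C then 1 else 0) + DD C x a + DD C x b + QQ C x a b"
proof -
  let ?G0 = "(if x \<in> C then {{}} else {}) :: nat set set"
  let ?S1 = "{y \<in> {0..<24} - {a,b}. sd x {b,y} \<in> C}"
  let ?S2 = "{y \<in> {0..<24} - {a,b}. sd x {a,y} \<in> C}"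
  let ?S3 = "{T \<in> RR C x a. b \<in> T}"
  let ?G1 = "(\<lambda>y. {b,y}) ` ?S1"
  let ?G2 = "(\<lambda>y. {a,y}) ` ?S2"
  let ?G3 = "insert a ` ?S3"
  have c0: "cnt C (sd x {a,b}) = card (?G0 \<union> ?G1 \<union> ?G2 \<union> ?G3)"
    using cnt_eq[OF CI xI, of "{a,b}"] G_decomp[OF aI bI ab, of x C] by simp
  have f0: "finite ?G0" by simp
  have f1: "finite ?G1" by simp
  have f2: "finite ?G2" by simp
  have f3: "finite ?G3" using finite_RR by simp
  have d01: "?G0 \<inter> ?G1 = {}" by auto
  have d012: "(?G0 \<union> ?G1) \<inter> ?G2 = {}" using ab by auto
  have d0123: "(?G0 \<union> ?G1 \<union> ?G2) \<inter> ?G3 = {}"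
  proof -
    have "\<And>T. T \<in> ?S3 \<Longrightarrow> a \<in> insert a T \<and> b \<in> insert a T" by auto
    moreover have "\<And>r. r \<in> ?G0 \<union> ?G1 \<union> ?G2 \<Longrightarrow> \<not> (a \<in> r \<and> b \<in> r)" using ab by (auto split: if_splits)
    ultimately show ?thesis by blast
  qed
  have "card (?G0 \<union> ?G1 \<union> ?G2 \<union> ?G3) = card ?G0 + card ?G1 + card ?G2 + card ?G3"
    using card_Un_disjoint[OF f0 f1 d01] card_Un_disjoint[OF _ f2 d012] card_Un_disjoint[OF _ f3 d0123] f0 f1 f2
    by simp
  moreover have "card ?G0 = (if x \<in> C then 1 else 0)" by simp
  moreover have "card ?G1 = card ?S1"
    by (rule card_image) (auto simp: inj_on_def doubleton_eq_iff)
  moreover have "card ?G2 = card ?S2"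
    by (rule card_image) (auto simp: inj_on_def doubleton_eq_iff)
  moreover have "card ?G3 = card ?S3"
  proof (rule card_image)
    show "inj_on (insert a) ?S3"
    proof (rule inj_onI)
      fix T U assume "T \<in> ?S3" "U \<in> ?S3" "insert a T = insert a U"
      then have "a \<notin> T" "a \<notin> U" "insert a T = insert a U" by (auto simp: RR_def)
      then show "T = U" by (metis Diff_insert_absorb)
    qed
  qed
  moreover have "DD C x b = card ?S1 + (if sd x {a,b} \<in> C then 1 else 0)" by (rule DD_split[OF aI ab])
  moreover have "DD C x a = card ?S2 + (if sd x {b,a} \<in> C then 1 else 0)" using DD_split[OF bI ab[symmetric], of C x] by (simp add: insert_commute)
  moreover have "{b,a} = {a,b}" by auto
  ultimately show ?thesis using c0 unfolding QQ_def by simp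
qed


lemma card_filter_sum: assumes "finite A" shows "card {x \<in> A. P x} = (\<Sum>x\<in>A. if P x then 1 else 0)"
proof -
  have "card {x \<in> A. P x} = (\<Sum>x\<in>{x \<in> A. P x}. 1)" by (rule card_eq_sum)
  also have "\<dots> = (\<Sum>x\<in>A. if P x then 1 else 0)" by (rule sum.inter_filter[OF assms])
  finally show ?thesis .
qed

lemma double_count:
  assumes fA: "finite A" and fR: "finite R" and sub: "\<And>T. T \<in> R \<Longrightarrow> T \<subseteq> A"
  shows "(\<Sum>a\<in>A. card {T \<in> R. a \<in> T}) = (\<Sum>T\<in>R. card T)"
proof -
  have "(\<Sum>a\<in>A. card {T \<in> R. a \<in> T}) = (\<Sum>a\<in>A. \<Sum>T\<in>R. if a \<in> T then 1 else 0)"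
    using fR by (simp add: card_filter_sum)
  also have "\<dots> = (\<Sum>T\<in>R. \<Sum>a\<in>A. if a \<in> T then 1 else 0)" by (rule sum.swap)
  also have "\<dots> = (\<Sum>T\<in>R. card T)"
  proof (rule sum.cong)
    fix T assume "T \<in> R"
    then have "{a \<in> A. a \<in> T} = T" using sub by auto
    then show "(\<Sum>a\<in>A. if a \<in> T then 1 else 0) = card T" using fA card_filter_sum[of A "\<lambda>a. a \<in> T"] by simp
  qed simp
  finally show ?thesis .
qed

lemma parity:
  assumes "x \<in> V24" "a \<in> {0..<24}" "b \<in> {0..<24}" "a \<noteq> b"
  shows "sd x {a,b} \<in> V24"
proof -
  have xI: "x \<subseteq> {0..<24}" and ev: "even (card x)" using assms(1) by (auto simp: V24_def words_def)
  have fx: "finite x" using xI finite_subset by blast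
  have "card (sd x {a,b}) + 2 * card (x \<inter> {a,b}) = card x + 2"
    using card_sd[of x "{a,b}"] fx assms(4) by simp
  then have "even (card (sd x {a,b}))" using ev by presburger
  moreover have "sd x {a,b} \<subseteq> {0..<24}" using sd_sub[OF xI, of "{a,b}"] assms by auto
  ultimately show ?thesis by (simp add: V24_def words_def)
qed

lemma handshake:
  assumes CI: "C \<subseteq> Pow {0..<24}" and vI: "v \<subseteq> {0..<24}"
  shows "(\<Sum>a\<in>{0..<24}. DD C v a) = 2 * cnt C v"
proof -
  let ?P = "{r. r \<subseteq> {0..<24} \<and> card r = 2 \<and> sd v r \<in> C}"
  have "cnt C v = card {r. r \<subseteq> {0..<24} \<and> card (sd {} r) = 2 \<and> sd v r \<in> C}"
    using cnt_eq[OF CI vI, of "{}"] by (simp add: sd_empty)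
  moreover have "sd {} r = r" for r by (simp add: sd_def)
  ultimately have c: "cnt C v = card ?P" by simp
  have fP: "finite ?P" by (rule finite_subset[of _ "Pow {0..<24}"]) auto
  have D: "DD C v a = card {p \<in> ?P. a \<in> p}" if aI: "a \<in> {0..<24}" for a
  proof -
    have "{p \<in> ?P. a \<in> p} = (\<lambda>b. {a,b}) ` {b \<in> {0..<24} - {a}. sd v {a,b} \<in> C}"
    proof
      show "{p \<in> ?P. a \<in> p} \<subseteq> (\<lambda>b. {a,b}) ` {b \<in> {0..<24} - {a}. sd v {a,b} \<in> C}"
      proof
        fix p assume p: "p \<in> {p \<in> ?P. a \<in> p}"
        then have "card (p - {a}) = Suc 0" by auto
        then obtain b where b: "p - {a} = {b}" using card1_ex by blast
        then have "p = {a,b}" "b \<noteq> a" using p by auto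
        then show "p \<in> (\<lambda>b. {a,b}) ` {b \<in> {0..<24} - {a}. sd v {a,b} \<in> C}" using p by auto
      qed
    next
      show "(\<lambda>b. {a,b}) ` {b \<in> {0..<24} - {a}. sd v {a,b} \<in> C} \<subseteq> {p \<in> ?P. a \<in> p}"
        using aI by auto
    qed
    moreover have "inj_on (\<lambda>b. {a,b}) {b \<in> {0..<24} - {a}. sd v {a,b} \<in> C}"
      by (auto simp: inj_on_def doubleton_eq_iff)
    ultimately show ?thesis unfolding DD_def by (simp add: card_image)
  qed
  have "(\<Sum>a\<in>{0..<24}. DD C v a) = (\<Sum>a\<in>{0..<24}. card {p \<in> ?P. a \<in> p})"
    using D by simp
  also have "\<dots> = (\<Sum>p\<in>?P. card p)" by (rule double_count) (use fP in auto)
  also have "\<dots> = (\<Sum>p\<in>?P. 2)" by simp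
  also have "\<dots> = 2 * card ?P" by simp
  finally show ?thesis using c by simp
qed

lemma sumQ: "(\<Sum>b\<in>{0..<24} - {a}. QQ C v a b) = 3 * card (RR C v a)"
proof -
  have "(\<Sum>b\<in>{0..<24} - {a}. QQ C v a b) = (\<Sum>T\<in>RR C v a. card T)"
    unfolding QQ_def by (rule double_count) (auto simp: finite_RR RR_def)
  also have "\<dots> = (\<Sum>T\<in>RR C v a. 3)" by (rule sum.cong) (auto simp: RR_def)
  finally show ?thesis by simp
qed


locale PC =
  fixes C :: "nat set set" and c :: nat
  assumes pc: "perfect_coloring24 C (20 + c) (256 - c) c (276 - c)"
begin

lemma CV: "C \<subseteq> V24" using pc unfolding perfect_coloring24_def by blast

lemma CI: "C \<subseteq> Pow {0..<24}" using CV by (auto simp: V24_def words_def)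

lemma col: assumes "w \<in> V24" shows "cnt C w = (if w \<in> C then 20 + c else c)"
  using pc assms unfolding perfect_coloring24_def cnt_def by auto

lemma xV: "x \<in> C \<Longrightarrow> x \<in> V24" using CV by blast
lemma xI: "x \<in> C \<Longrightarrow> x \<subseteq> {0..<24}" using CI by blast

lemma nonedge:
  assumes x: "x \<in> C" and a: "a \<in> {0..<24}" and b: "b \<in> {0..<24}" and ab: "a \<noteq> b"
    and ne: "sd x {a,b} \<notin> C"
  shows "1 + DD C x a + DD C x b + QQ C x a b = c"
  using Dec[OF CI xI[OF x] a b ab] col[OF parity[OF xV[OF x] a b ab]] ne x by simp

lemma edge:
  assumes x: "x \<in> C" and a: "a \<in> {0..<24}" and b: "b \<in> {0..<24}" and ab: "a \<noteq> b"
    and e: "sd x {a,b} \<in> C"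
  shows "DD C x a + DD C x b + QQ C x a b = 21 + c"
  using Dec[OF CI xI[OF x] a b ab] col[OF parity[OF xV[OF x] a b ab]] e x by simp

lemma univ:
  assumes x: "x \<in> C" and a: "a \<in> {0..<24}" and big: "c \<le> DD C x a"
  shows "\<forall>b\<in>{0..<24} - {a}. sd x {a,b} \<in> C"
proof (rule ccontr)
  assume "\<not> ?thesis"
  then obtain b where b: "b \<in> {0..<24}" "b \<noteq> a" "sd x {a,b} \<notin> C" by blast
  from nonedge[OF x a b(1) b(2)[symmetric] b(3)] big show False by simp
qed


lemma arith1: "X = Y \<Longrightarrow> X = q + 23*d + SA + N0 \<Longrightarrow> Y = 23*c + 21*S1 \<Longrightarrow> d = S1 \<Longrightarrow> N0 + S1 = 23
   \<Longrightarrow> SI = d + SA \<Longrightarrow> q = 3*m \<Longrightarrow> SI = 40 + 2*c \<Longrightarrow> 3*m + 63 = 21*(c::nat)" by linarith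

lemma m_eq:
  assumes v: "v \<in> C" and a: "a \<in> {0..<24}"
  shows "3 * card (RR C v a) + 63 = 21 * c"
proof -
  let ?I = "{0..<24::nat}"
  let ?A = "?I - {a}"
  let ?E = "\<lambda>b. sd v {a,b} \<in> C"
  have hs: "(\<Sum>b\<in>?I. DD C v b) = 40 + 2 * c"
    using handshake[OF CI xI[OF v]] col[OF xV[OF v]] v by simp
  have eq: "QQ C v a b + DD C v a + DD C v b + (if ?E b then 0 else 1) = c + (if ?E b then 21 else 0)"
    if b: "b \<in> ?A" for b
  proof (cases "?E b")
    case True then show ?thesis using edge[OF v a _ _ True] b by auto
  next
    case False then show ?thesis using nonedge[OF v a _ _ False] b by auto
  qed
  have "(\<Sum>b\<in>?A. QQ C v a b + DD C v a + DD C v b + (if ?E b then 0 else 1))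
      = (\<Sum>b\<in>?A. c + (if ?E b then 21 else 0))"
    using eq by (rule sum.cong[OF refl])
  moreover have "(\<Sum>b\<in>?A. QQ C v a b + DD C v a + DD C v b + (if ?E b then 0 else 1))
      = (\<Sum>b\<in>?A. QQ C v a b) + 23 * DD C v a + (\<Sum>b\<in>?A. DD C v b) + (\<Sum>b\<in>?A. (if ?E b then 0 else 1))"
    using a by (simp add: sum.distrib)
  moreover have "(\<Sum>b\<in>?A. c + (if ?E b then 21 else 0)) = 23 * c + 21 * (\<Sum>b\<in>?A. (if ?E b then 1 else 0))"
  proof -
    have "(\<Sum>b\<in>?A. c + (if ?E b then 21 else 0)) = (\<Sum>b\<in>?A. c + 21 * (if ?E b then 1 else 0))"
      by (rule sum.cong) auto
    also have "\<dots> = (\<Sum>b\<in>?A. c) + (\<Sum>b\<in>?A. 21 * (if ?E b then 1 else 0))"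
      by (rule sum.distrib)
    also have "\<dots> = 23 * c + 21 * (\<Sum>b\<in>?A. (if ?E b then 1 else 0))"
      using a by (simp only: sum_distrib_left[symmetric]) simp
    finally show ?thesis .
  qed
  moreover have dA: "DD C v a = (\<Sum>b\<in>?A. (if ?E b then 1 else 0))"
    unfolding DD_def by (rule card_filter_sum) simp
  moreover have "(\<Sum>b\<in>?A. (if ?E b then 0 else 1)) + (\<Sum>b\<in>?A. (if ?E b then 1 else 0)) = (23::nat)"
  proof -
    have "(\<Sum>b\<in>?A. (if ?E b then 0 else 1)) + (\<Sum>b\<in>?A. (if ?E b then 1 else 0)) = (\<Sum>b\<in>?A. (1::nat))"
    proof -
      have "(\<Sum>b\<in>?A. (if ?E b then 0 else 1)) + (\<Sum>b\<in>?A. (if ?E b then 1 else 0))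
         = (\<Sum>b\<in>?A. (if ?E b then 0 else 1) + (if ?E b then 1 else 0))" by (rule sum.distrib[symmetric])
      also have "\<dots> = (\<Sum>b\<in>?A. (1::nat))" by (rule sum.cong) auto
      finally show ?thesis .
    qed
    then show ?thesis using a by simp
  qed
  moreover have "(\<Sum>b\<in>?I. DD C v b) = DD C v a + (\<Sum>b\<in>?A. DD C v b)"
    using a by (simp add: sum.remove)
  moreover have "(\<Sum>b\<in>?A. QQ C v a b) = 3 * card (RR C v a)" by (rule sumQ)
  ultimately show ?thesis using hs by (rule arith1)
qed


lemma card_I3: assumes "a \<in> {0..<24::nat}" "j \<in> {0..<24}" "k \<in> {0..<24}" "a \<noteq> j" "a \<noteq> k" "j \<noteq> k"
  shows "card ({0..<24} - {a,j,k}) = 21"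
proof -
  have "card ({0..<24::nat} - {a,j,k}) = card {0..<24::nat} - card {a,j,k}"
    by (rule card_Diff_subset) (use assms in auto)
  then show ?thesis using assms by simp
qed

lemma J_eq:
  assumes a: "a \<in> {0..<24}" and j: "j \<in> {0..<24}" and k: "k \<in> {0..<24}"
    and d: "a \<noteq> j" "a \<noteq> k" "j \<noteq> k"
  shows "{T \<in> RR C v a. j \<in> T \<and> k \<in> T} =
     (\<lambda>l. {j,k,l}) ` {l \<in> {0..<24} - {a,j,k}. sd v (insert a {j,k,l}) \<in> C}"
proof
  show "{T \<in> RR C v a. j \<in> T \<and> k \<in> T} \<subseteq> (\<lambda>l. {j,k,l}) ` {l \<in> {0..<24} - {a,j,k}. sd v (insert a {j,k,l}) \<in> C}"
  proof
    fix T assume T: "T \<in> {T \<in> RR C v a. j \<in> T \<and> k \<in> T}"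
    then have TI: "T \<subseteq> {0..<24} - {a}" and cT: "card T = 3" and TC: "sd v (insert a T) \<in> C"
      and jk: "j \<in> T" "k \<in> T" by (auto simp: RR_def)
    have fT: "finite T" using TI finite_subset by blast
    have "card (T - {j,k}) = card T - card {j,k}" by (rule card_Diff_subset) (use jk in auto)
    then have "card (T - {j,k}) = Suc 0" using cT d by simp
    then obtain l where l: "T - {j,k} = {l}" using card1_ex by blast
    then have Teq: "T = {j,k,l}" using jk by auto
    have "l \<in> {0..<24} - {a,j,k}" using l TI by auto
    then show "T \<in> (\<lambda>l. {j,k,l}) ` {l \<in> {0..<24} - {a,j,k}. sd v (insert a {j,k,l}) \<in> C}"
      using Teq TC by blast
  qed
next
  show "(\<lambda>l. {j,k,l}) ` {l \<in> {0..<24} - {a,j,k}. sd v (insert a {j,k,l}) \<in> C} \<subseteq> {T \<in> RR C v a. j \<in> T \<and> k \<in> T}"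
  proof
    fix T assume "T \<in> (\<lambda>l. {j,k,l}) ` {l \<in> {0..<24} - {a,j,k}. sd v (insert a {j,k,l}) \<in> C}"
    then obtain l where l: "l \<in> {0..<24} - {a,j,k}" "sd v (insert a {j,k,l}) \<in> C" "T = {j,k,l}" by blast
    have "card {j,k,l} = 3" using l(1) d by auto
    then show "T \<in> {T \<in> RR C v a. j \<in> T \<and> k \<in> T}" using l a j k d by (auto simp: RR_def)
  qed
qed

lemma card_J:
  assumes a: "a \<in> {0..<24}" and j: "j \<in> {0..<24}" and k: "k \<in> {0..<24}"
    and d: "a \<noteq> j" "a \<noteq> k" "j \<noteq> k"
  shows "card {T \<in> RR C v a. j \<in> T \<and> k \<in> T} = card {l \<in> {0..<24} - {a,j,k}. sd v (insert a {j,k,l}) \<in> C}"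
  unfolding J_eq[OF assms] by (rule card_image) (auto simp: inj_on_def)

lemma sd_swap1: assumes "a \<noteq> j" "a \<noteq> k" "j \<noteq> k" shows "sd (sd v {a,j}) {k,j} = sd v {a,k}"
  using assms unfolding sd_def by auto

lemma sd_swap2: assumes "a \<noteq> j" "a \<noteq> k" "j \<noteq> k" "l \<notin> {a,j,k}"
  shows "sd (sd v {a,j}) {k,l} = sd v (insert a {j,k,l})"
  using assms unfolding sd_def by auto

lemma tlemma:
  assumes v: "v \<in> C" and a: "a \<in> {0..<24}" and j: "j \<in> {0..<24}" and k: "k \<in> {0..<24}"
    and d: "a \<noteq> j" "a \<noteq> k" "j \<noteq> k"
    and ej: "sd v {a,j} \<in> C" and ek: "sd v {a,k} \<in> C"
  shows "(\<forall>l\<in>{0..<24} - {a,j,k}. sd v (insert a {j,k,l}) \<in> C) \<or> card {T \<in> RR C v a. j \<in> T \<and> k \<in> T} + 2 \<le> c"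
proof (cases "c \<le> DD C (sd v {a,j}) k")
  case True
  have "\<forall>b\<in>{0..<24} - {k}. sd (sd v {a,j}) {k,b} \<in> C" by (rule univ[OF ej k True])
  have "\<forall>l\<in>{0..<24} - {a,j,k}. sd v (insert a {j,k,l}) \<in> C"
  proof
    fix l assume l: "l \<in> {0..<24} - {a,j,k}"
    then have "sd (sd v {a,j}) {k,l} \<in> C" using \<open>\<forall>b\<in>{0..<24} - {k}. sd (sd v {a,j}) {k,b} \<in> C\<close> by auto
    moreover have "sd (sd v {a,j}) {k,l} = sd v (insert a {j,k,l})" using l by (intro sd_swap2[OF d]) auto
    ultimately show "sd v (insert a {j,k,l}) \<in> C" by simp
  qed
  then show ?thesis by blast
next
  case False
  let ?L = "{l \<in> {0..<24} - {a,j,k}. sd v (insert a {j,k,l}) \<in> C}"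
  have sub: "insert j ?L \<subseteq> {b \<in> {0..<24} - {k}. sd (sd v {a,j}) {k,b} \<in> C}"
    using sd_swap1[OF d, of v] sd_swap2[OF d, of _ v] ek j d by auto
  have "card (insert j ?L) \<le> DD C (sd v {a,j}) k" unfolding DD_def
    by (rule card_mono[OF _ sub]) simp
  moreover have "card (insert j ?L) = card ?L + 1" by simp
  ultimately have "card ?L + 2 \<le> c" using False by linarith
  then show ?thesis using card_J[OF a j k d] by simp
qed

lemma inclexcl:
  "QQ C v a j + QQ C v a k \<le> card (RR C v a) + card {T \<in> RR C v a. j \<in> T \<and> k \<in> T}"
proof -
  let ?A = "{T \<in> RR C v a. j \<in> T}" and ?B = "{T \<in> RR C v a. k \<in> T}"
  have e1: "card ?A + card ?B = card (?A \<union> ?B) + card (?A \<inter> ?B)"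
    by (rule card_Un_Int) (auto intro: finite_subset[OF _ finite_RR])
  have e2: "card (?A \<union> ?B) \<le> card (RR C v a)" by (rule card_mono[OF finite_RR]) auto
  have e3: "?A \<inter> ?B = {T \<in> RR C v a. j \<in> T \<and> k \<in> T}" by auto
  from e1 e2 show ?thesis unfolding QQ_def e3 by linarith
qed

lemma full_J:
  assumes a: "a \<in> {0..<24}" and j: "j \<in> {0..<24}" and k: "k \<in> {0..<24}"
    and d: "a \<noteq> j" "a \<noteq> k" "j \<noteq> k"
    and full: "\<forall>l\<in>{0..<24} - {a,j,k}. sd v (insert a {j,k,l}) \<in> C"
  shows "card {T \<in> RR C v a. j \<in> T \<and> k \<in> T} = 21"
proof -
  have "{l \<in> {0..<24} - {a,j,k}. sd v (insert a {j,k,l}) \<in> C} = {0..<24} - {a,j,k}" using full by auto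
  then show ?thesis using card_J[OF a j k d, of v] card_I3[OF a j k d] by simp
qed

lemma third:
  assumes a: "a \<in> {0..<24}" and j: "j \<in> {0..<24}" and k: "k \<in> {0..<24}"
    and d: "a \<noteq> j" "a \<noteq> k" "j \<noteq> k" and l: "l \<noteq> j" "l \<noteq> k"
    and full: "\<forall>l\<in>{0..<24} - {a,j,k}. sd v (insert a {j,k,l}) \<in> C"
  shows "QQ C v a l + 20 \<le> card (RR C v a)"
proof -
  let ?J = "{T \<in> RR C v a. j \<in> T \<and> k \<in> T}"
  have J21: "card ?J = 21" by (rule full_J[OF a j k d full])
  have sub: "{T \<in> RR C v a. l \<in> T} \<subseteq> insert {j,k,l} (RR C v a - ?J)"
  proof
    fix T assume T: "T \<in> {T \<in> RR C v a. l \<in> T}"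
    show "T \<in> insert {j,k,l} (RR C v a - ?J)"
    proof (cases "j \<in> T \<and> k \<in> T")
      case True
      have cT: "card T = 3" and fT: "finite T" using T by (auto simp: RR_def intro: finite_subset)
      have "{j,k,l} \<subseteq> T" using True T by auto
      moreover have "card {j,k,l} = 3" using d l by auto
      ultimately have "{j,k,l} = T" using cT fT by (metis card_subset_eq)
      then show ?thesis by blast
    next
      case False then show ?thesis using T by blast
    qed
  qed
  have "QQ C v a l \<le> card (insert {j,k,l} (RR C v a - ?J))" unfolding QQ_def
    by (rule card_mono[OF _ sub]) (simp add: finite_RR)
  also have "\<dots> \<le> card (RR C v a - ?J) + 1" by (simp add: card_insert_if finite_RR)
  also have "card (RR C v a - ?J) = card (RR C v a) - card ?J"
    by (rule card_Diff_subset) (auto intro: finite_subset[OF _ finite_RR])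
  finally have "QQ C v a l \<le> card (RR C v a) - 21 + 1" using J21 by simp
  moreover have "card ?J \<le> card (RR C v a)" by (rule card_mono[OF finite_RR]) auto
  ultimately show ?thesis using J21 by linarith
qed


lemma bad_deg:
  assumes v: "v \<in> C" and bad: "\<forall>a\<in>{0..<24}. \<exists>b\<in>{0..<24} - {a}. sd v {a,b} \<notin> C"
    and a: "a \<in> {0..<24}"
  shows "DD C v a + 1 \<le> c"
proof (rule ccontr)
  assume "\<not> ?thesis"
  then have "c \<le> DD C v a" by simp
  from univ[OF v a this] bad a show False by blast
qed

lemma nbr_card: "card {b \<in> {0..<24} - {a}. sd v {a,b} \<in> C} = DD C v a" unfolding DD_def ..

lemma obtain_other:
  assumes "finite N" "card N \<ge> Suc (card F)" "finite F"
  obtains y where "y \<in> N" "y \<notin> F"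
proof -
  have "\<not> N \<subseteq> F"
  proof
    assume "N \<subseteq> F" then have "card N \<le> card F" using assms(3) by (rule card_mono[rotated])
    then show False using assms(2) by simp
  qed
  then show ?thesis using that by blast
qed

lemma vertex_class:
  assumes c7: "c \<le> 7" and v: "v \<in> C" and bad: "\<forall>a\<in>{0..<24}. \<exists>b\<in>{0..<24} - {a}. sd v {a,b} \<notin> C"
    and a: "a \<in> {0..<24}" and two: "2 \<le> DD C v a"
  shows "(DD C v a = 2 \<and> 6 \<le> c) \<or> (DD C v a = 6 \<and> c = 7)"
proof -
  let ?N = "{b \<in> {0..<24} - {a}. sd v {a,b} \<in> C}"
  have fN: "finite ?N" by simp
  have cN: "card ?N = DD C v a" by (rule nbr_card)
  obtain j where j: "j \<in> ?N" "j \<notin> {}" using obtain_other[OF fN, of "{}"] cN two by auto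
  obtain k where k: "k \<in> ?N" "k \<notin> {j}" using obtain_other[OF fN, of "{j}"] cN two by auto
  have jI: "j \<in> {0..<24}" and kI: "k \<in> {0..<24}" and d: "a \<noteq> j" "a \<noteq> k" "j \<noteq> k"
    and ej: "sd v {a,j} \<in> C" and ek: "sd v {a,k} \<in> C" using j k by auto
  have m: "3 * card (RR C v a) + 63 = 21 * c" by (rule m_eq[OF v a])
  have qj: "DD C v a + DD C v j + QQ C v a j = 21 + c" using edge[OF v a jI d(1) ej] .
  have qk: "DD C v a + DD C v k + QQ C v a k = 21 + c" using edge[OF v a kI d(2) ek] .
  have da: "DD C v a + 1 \<le> c" by (rule bad_deg[OF v bad a])
  have dj: "DD C v j + 1 \<le> c" by (rule bad_deg[OF v bad jI])
  have dk: "DD C v k + 1 \<le> c" by (rule bad_deg[OF v bad kI])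
  have ie: "QQ C v a j + QQ C v a k \<le> card (RR C v a) + card {T \<in> RR C v a. j \<in> T \<and> k \<in> T}"
    by (rule inclexcl)
  from tlemma[OF v a jI kI d ej ek] show ?thesis
  proof
    assume full: "\<forall>l\<in>{0..<24} - {a,j,k}. sd v (insert a {j,k,l}) \<in> C"
    have J21: "card {T \<in> RR C v a. j \<in> T \<and> k \<in> T} = 21" by (rule full_J[OF a jI kI d full])
    have "card {T \<in> RR C v a. j \<in> T \<and> k \<in> T} \<le> card (RR C v a)" by (rule card_mono[OF finite_RR]) auto
    then have c6: "6 \<le> c" using J21 m by linarith
    have "DD C v a \<le> 2"
    proof (rule ccontr)
      assume "\<not> DD C v a \<le> 2"
      then have "card ?N \<ge> Suc (card {j,k})" using cN d by simp
      then obtain l where l: "l \<in> ?N" "l \<notin> {j,k}" using obtain_other[OF fN] by blast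
      have lI: "l \<in> {0..<24}" and al: "a \<noteq> l" and el: "sd v {a,l} \<in> C" using l by auto
      have ql: "DD C v a + DD C v l + QQ C v a l = 21 + c" using edge[OF v a lI al el] .
      have dl: "DD C v l + 1 \<le> c" by (rule bad_deg[OF v bad lI])
      have "QQ C v a l + 20 \<le> card (RR C v a)" using third[OF a jI kI d _ _ full] l(2) by auto
      then show False using ql dl da m c7 by linarith
    qed
    then show ?thesis using two c6 by simp
  next
    assume t: "card {T \<in> RR C v a. j \<in> T \<and> k \<in> T} + 2 \<le> c"
    have "DD C v a = 6 \<and> c = 7" using t ie qj qk da dj dk m c7 two by linarith
    then show ?thesis by simp
  qed
qed


lemma sum_if_const: "finite A \<Longrightarrow> (\<Sum>b\<in>A. if P b then (K::nat) else 0) = K * card {b \<in> A. P b}"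
proof -
  assume fA: "finite A"
  have "(\<Sum>b\<in>A. if P b then K else 0) = (\<Sum>b\<in>A. K * (if P b then 1 else 0))" by (rule sum.cong) auto
  also have "\<dots> = K * (\<Sum>b\<in>A. (if P b then 1 else 0))" by (rule sum_distrib_left[symmetric])
  also have "\<dots> = K * card {b \<in> A. P b}" using card_filter_sum[OF fA, of P] by simp
  finally show ?thesis .
qed

lemma bad_false:
  assumes c7: "c \<le> 7" and v: "v \<in> C" and bad: "\<forall>a\<in>{0..<24}. \<exists>b\<in>{0..<24} - {a}. sd v {a,b} \<notin> C"
  shows False
proof -
  have hs: "(\<Sum>b\<in>{0..<24}. DD C v b) = 40 + 2 * c"
    using handshake[OF CI xI[OF v]] col[OF xV[OF v]] v by simp
  show False
  proof (cases "\<exists>a\<in>{0..<24}. DD C v a = 6 \<and> c = 7")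
    case True
    then obtain a where a: "a \<in> {0..<24}" "DD C v a = 6" "c = 7" by blast
    let ?P = "\<lambda>b. b = a \<or> sd v {a,b} \<in> C"
    have le: "DD C v b \<le> (if ?P b then 6 else 0)" if b: "b \<in> {0..<24}" for b
    proof (cases "?P b")
      case True then show ?thesis using bad_deg[OF v bad b] a by simp
    next
      case False
      then have "1 + DD C v a + DD C v b + QQ C v a b = c" using nonedge[OF v a(1) b] by auto
      then show ?thesis using a False by simp
    qed
    have "(\<Sum>b\<in>{0..<24}. DD C v b) \<le> (\<Sum>b\<in>{0..<24::nat}. if ?P b then 6 else 0)"
      using le by (rule sum_mono)
    also have "\<dots> = 6 * card {b \<in> {0..<24}. ?P b}" by (rule sum_if_const) simp
    also have "{b \<in> {0..<24}. ?P b} = insert a {b \<in> {0..<24} - {a}. sd v {a,b} \<in> C}" using a by auto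
    also have "card \<dots> = 7" using nbr_card[of a v] a by simp
    finally show False using hs a by simp
  next
    case False
    have le: "DD C v b \<le> (if 6 \<le> c then 2 else 1)" if b: "b \<in> {0..<24}" for b
    proof (cases "2 \<le> DD C v b")
      case True
      from vertex_class[OF c7 v bad b True] False b show ?thesis by auto
    next
      case False then show ?thesis by simp
    qed
    have "(\<Sum>b\<in>{0..<24}. DD C v b) \<le> (\<Sum>b\<in>{0..<24::nat}. (if 6 \<le> c then 2 else 1))"
      using le by (rule sum_mono)
    also have "\<dots> = 24 * (if 6 \<le> c then 2 else 1)" by simp
    finally show False using hs by (cases "6 \<le> c") simp_all
  qed
qed

end


lemma sd_comm: "sd x z = sd z x" unfolding sd_def by blast

theorem lemma7:
  fixes C :: "nat set set" and c :: nat
  assumes "c \<le> 7"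
    and "perfect_coloring24 C (20 + c) (256 - c) c (276 - c)"
  shows "\<exists>F. (\<forall>S \<in> F. is_sphere S) \<and> C = \<Union>F"
proof -
  interpret PC C c using assms(2) by unfold_locales
  have good: "\<exists>i\<in>{0..<24}. \<forall>j\<in>{0..<24} - {i}. sd v {i,j} \<in> C" if v: "v \<in> C" for v
    using bad_false[OF assms(1) v] by blast
  let ?F = "{S. is_sphere S \<and> S \<subseteq> C}"
  have "C = \<Union>?F"
  proof
    show "\<Union>?F \<subseteq> C" by blast
  next
    show "C \<subseteq> \<Union>?F"
    proof
      fix v assume v: "v \<in> C"
      obtain i where i: "i \<in> {0..<24}" "\<forall>j\<in>{0..<24} - {i}. sd v {i,j} \<in> C" using good[OF v] by blast
      let ?z = "sd v {i}"
      have vI: "v \<subseteq> {0..<24}" and ev: "even (card v)" using xV[OF v] by (auto simp: V24_def words_def)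
      have fv: "finite v" using vI finite_subset by blast
      have zI: "?z \<subseteq> {0..<24}" using sd_sub[OF vI, of "{i}"] i by auto
      have "card ?z + 2 * card (v \<inter> {i}) = card v + 1" using card_sd[of v "{i}"] fv by simp
      then have oz: "odd (card ?z)" using ev by presburger
      have zw: "?z \<in> words" using zI by (simp add: words_def)
      have sub: "sphere ?z \<subseteq> C"
      proof
        fix x assume x: "x \<in> sphere ?z"
        then have xI': "x \<subseteq> {0..<24}" and h: "card (sd x ?z) = 1"
          by (auto simp: sphere_def words_def hdist_def sd_def)
        then obtain b where b: "sd x ?z = {b}" using card1_ex[of "sd x ?z"] by auto
        have bI: "b \<in> {0..<24}" using sd_sub[OF xI' zI] b by auto
        have "x = sd ?z (sd ?z x)" by (simp add: sd_inv)
        also have "sd ?z x = {b}" using b sd_comm by metis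
        finally have xe: "x = sd ?z {b}" .
        show "x \<in> C"
        proof (cases "b = i")
          case True
          then have "x = v" using xe unfolding sd_def by auto
          then show ?thesis using v by simp
        next
          case False
          then have "x = sd v {i,b}" using xe unfolding sd_def by auto
          then show ?thesis using i False bI by auto
        qed
      qed
      have "v \<in> sphere ?z"
      proof -
        have "sd v ?z = {i}" by (rule sd_inv)
        then have "hdist v ?z = 1" by (simp add: hdist_def sd_def[symmetric])
        then show ?thesis using vI by (simp add: sphere_def words_def)
      qed
      moreover have "is_sphere (sphere ?z)" using zw oz unfolding is_sphere_def by blast
      ultimately show "v \<in> \<Union>?F" using sub by blast
    qed
  qed
  moreover have "\<forall>S\<in>?F. is_sphere S" by blast
  ultimately show ?thesis by blast
qed

end
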